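(* Let $M$ be a sofic monoid, let $\Sigma=(D_i,\sigma_i)_{i\in I}$ be a sofic approximation of $M$, and let $A$ be a finite set. Then $h_\Sigma(A^M,M,\rho)=\log|A|$, where $\rho$ is the pseudometric on $A^M$ given by $\rho(x,y)=0$ if $x(1_M)=y(1_M)$ and $\rho(x,y)=1$ otherwise.
   Context: $A^M$ is the set of maps $M\to A$ with the prodiscrete topology and shift action $(mx)(m')=x(m'm)$. Hamming metric on $\operatorname{Map}(D)$ (maps $D\to D$, $D$ finite non-empty): $d_D^{\mathrm{Ham}}(f,g)=\frac{1}{|D|}|\{v:f(v)\ne g(v)\}|$. A sofic approximation of $M$ is a net $(D_i,\sigma_i)_{i\in I}$ over a directed set, $D_i$ non-empty finite, $\sigma_i\colon M\to\operatorname{Map}(D_i)$, with $\sigma_i(1_M)=\mathrm{Id}_{D_i}$, $\lim_i d^{\mathrm{Ham}}_{D_i}(\sigma_i(m_1m_2),\sigma_i(m_1)\sigma_i(m_2))=0$ for all $m_1,m_2$, and $\lim_i d^{\mathrm{Ham}}_{D_i}(\sigma_i(m_1),\sigma_i(m_2))=1$ for distinct $m_1,m_2$; $M$ is sofic iff it admits one. For a compact space $X$ with continuous $M$-action and continuous pseudometric $\rho$, and non-empty finite $D$: on $X^D$, $\rho_2^D(\varphi,\psi)=(\frac{1}{|D|}\sum_v\rho(\varphi(v),\psi(v))^2)^{1/2}$, $\rho_\infty^D(\varphi,\psi)=\max_v\rho(\varphi(v),\psi(v))$, $(m\varphi)(v)=m\varphi(v)$; for finite $F\subset M$, $\delta>0$,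 $\sigma\colon M\to\operatorname{Map}(D)$: $\operatorname{Map}(X,M,\rho,F,\delta,\sigma)=\{\varphi\in X^D:\rho_2^D(\varphi\circ\sigma(m),m\varphi)\le\delta\ \forall m\in F\}$. $N_\varepsilon(Z,d)$ is the maximal cardinality of a subset of $Z$ with pairwise $d$-distances $\ge\varepsilon$. $h_\Sigma(X,M,\rho)=\sup_{\varepsilon>0}\inf_F\inf_{\delta>0}\limsup_i\frac{1}{|D_i|}\log N_\varepsilon(\operatorname{Map}(X,M,\rho,F,\delta,\sigma_i),\rho_\infty^{D_i})$, infimum over finite $F\subset M$, $\log 0=-\infty$. *)

theory Defs
  imports "HOL-Analysis.Analysis" "HOL-Library.FuncSet" "HOL-Library.Extended_Real"
    "HOL-Library.Liminf_Limsup"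
begin

definition directed_set :: "'i set \<Rightarrow> ('i \<Rightarrow> 'i \<Rightarrow> bool) \<Rightarrow> bool" where
  "directed_set I le \<longleftrightarrow> I \<noteq> {} \<and> (\<forall>i\<in>I. le i i)
     \<and> (\<forall>i\<in>I. \<forall>j\<in>I. \<forall>k\<in>I. le i j \<longrightarrow> le j k \<longrightarrow> le i k)
     \<and> (\<forall>i\<in>I. \<forall>j\<in>I. \<exists>k\<in>I. le i k \<and> le j k)"

definition net_filter :: "'i set \<Rightarrow> ('i \<Rightarrow> 'i \<Rightarrow> bool) \<Rightarrow> 'i filter" where
  "net_filter I le = (INF i\<in>I. principal {j\<in>I. le i j})"

definition ham_dist :: "'d set \<Rightarrow> ('d \<Rightarrow> 'd) \<Rightarrow> ('d \<Rightarrow> 'd) \<Rightarrow> real" where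
  "ham_dist D f g = real (card {v\<in>D. f v \<noteq> g v}) / real (card D)"

definition sofic_approx ::
  "'i set \<Rightarrow> ('i \<Rightarrow> 'i \<Rightarrow> bool) \<Rightarrow> ('i \<Rightarrow> 'd set) \<Rightarrow> ('i \<Rightarrow> 'm::monoid_mult \<Rightarrow> 'd \<Rightarrow> 'd) \<Rightarrow> bool" where
  "sofic_approx I le D \<sigma> \<longleftrightarrow> directed_set I le
     \<and> (\<forall>i\<in>I. finite (D i) \<and> D i \<noteq> {} \<and> (\<forall>m. \<sigma> i m ` D i \<subseteq> D i)
              \<and> (\<forall>v\<in>D i. \<sigma> i 1 v = v))
     \<and> (\<forall>m1 m2. ((\<lambda>i. ham_dist (D i) (\<sigma> i (m1 * m2)) (\<sigma> i m1 \<circ> \<sigma> i m2)) \<longlongrightarrow> 0)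
                 (net_filter I le))
     \<and> (\<forall>m1 m2. m1 \<noteq> m2 \<longrightarrow> ((\<lambda>i. ham_dist (D i) (\<sigma> i m1) (\<sigma> i m2)) \<longlongrightarrow> 1)
                 (net_filter I le))"

definition rho2 :: "'d set \<Rightarrow> ('x \<Rightarrow> 'x \<Rightarrow> real) \<Rightarrow> ('d \<Rightarrow> 'x) \<Rightarrow> ('d \<Rightarrow> 'x) \<Rightarrow> real" where
  "rho2 D \<rho> \<phi> \<psi> = sqrt ((\<Sum>v\<in>D. (\<rho> (\<phi> v) (\<psi> v))\<^sup>2) / real (card D))"

definition rho_inf :: "'d set \<Rightarrow> ('x \<Rightarrow> 'x \<Rightarrow> real) \<Rightarrow> ('d \<Rightarrow> 'x) \<Rightarrow> ('d \<Rightarrow> 'x) \<Rightarrow> real" where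
  "rho_inf D \<rho> \<phi> \<psi> = Max ((\<lambda>v. \<rho> (\<phi> v) (\<psi> v)) ` D)"

text \<open>Map(X, M, rho, F, delta, sigma), with X^D realised as extensional functions D \<rightarrow> X.\<close>
definition Map_set ::
  "'x set \<Rightarrow> ('m \<Rightarrow> 'x \<Rightarrow> 'x) \<Rightarrow> ('x \<Rightarrow> 'x \<Rightarrow> real) \<Rightarrow> 'm set \<Rightarrow> real
   \<Rightarrow> 'd set \<Rightarrow> ('m \<Rightarrow> 'd \<Rightarrow> 'd) \<Rightarrow> ('d \<Rightarrow> 'x) set" where
  "Map_set X act \<rho> F \<delta> D \<sigma> =
     {\<phi> \<in> D \<rightarrow>\<^sub>E X. \<forall>m\<in>F. rho2 D \<rho> (\<phi> \<circ> \<sigma> m) (\<lambda>v. act m (\<phi> v)) \<le> \<delta>}"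

definition sep_num :: "real \<Rightarrow> 'z set \<Rightarrow> ('z \<Rightarrow> 'z \<Rightarrow> real) \<Rightarrow> enat" where
  "sep_num \<epsilon> Z d = (SUP S\<in>{S. S \<subseteq> Z \<and> finite S \<and> (\<forall>x\<in>S. \<forall>y\<in>S. x \<noteq> y \<longrightarrow> \<epsilon> \<le> d x y)}.
                      enat (card S))"

definition elog :: "enat \<Rightarrow> ereal" where
  "elog n = (case n of enat k \<Rightarrow> (if k = 0 then -\<infinity> else ereal (ln (real k))) | \<infinity> \<Rightarrow> \<infinity>)"

definition sofic_entropy ::
  "'i set \<Rightarrow> ('i \<Rightarrow> 'i \<Rightarrow> bool) \<Rightarrow> ('i \<Rightarrow> 'd set) \<Rightarrow> ('i \<Rightarrow> 'm \<Rightarrow> 'd \<Rightarrow> 'd)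
   \<Rightarrow> 'x set \<Rightarrow> ('m \<Rightarrow> 'x \<Rightarrow> 'x) \<Rightarrow> ('x \<Rightarrow> 'x \<Rightarrow> real) \<Rightarrow> ereal" where
  "sofic_entropy I le D \<sigma> X act \<rho> =
     (SUP \<epsilon>\<in>{0<..}. INF F\<in>{F. finite F}. INF \<delta>\<in>{0<..}.
        Limsup (net_filter I le)
          (\<lambda>i. elog (sep_num \<epsilon> (Map_set X act \<rho> F \<delta> (D i) (\<sigma> i)) (rho_inf (D i) \<rho>))
               / ereal (real (card (D i)))))"

definition full_shift :: "'a set \<Rightarrow> ('m \<Rightarrow> 'a) set" where
  "full_shift A = {x. \<forall>m. x m \<in> A}"

definition shift_act :: "'m::monoid_mult \<Rightarrow> ('m \<Rightarrow> 'a) \<Rightarrow> ('m \<Rightarrow> 'a)" where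
  "shift_act m x = (\<lambda>m'. x (m' * m))"

definition rho_one :: "('m::monoid_mult \<Rightarrow> 'a) \<Rightarrow> ('m \<Rightarrow> 'a) \<Rightarrow> real" where
  "rho_one x y = (if x 1 = y 1 then 0 else 1)"

end

theory Submission
  imports Defs
begin

lemma sep_upper:
  fixes A :: "'a set" and D :: "'d set" and Z :: "('d \<Rightarrow> ('m::monoid_mult \<Rightarrow> 'a)) set"
  assumes "finite A" "finite D" "D \<noteq> {}" "\<epsilon> > 0" "Z \<subseteq> D \<rightarrow>\<^sub>E full_shift A"
  shows "sep_num \<epsilon> Z (rho_inf D rho_one) \<le> enat (card A ^ card D)"
  unfolding sep_num_def
proof (rule SUP_least)
  fix S assume "S \<in> {S. S \<subseteq> Z \<and> finite S \<and> (\<forall>x\<in>S. \<forall>y\<in>S. x \<noteq> y \<longrightarrow> \<epsilon> \<le> rho_inf D rho_one x y)}"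
  hence S: "S \<subseteq> Z" "finite S" "\<And>x y. x\<in>S \<Longrightarrow> y\<in>S \<Longrightarrow> x \<noteq> y \<Longrightarrow> \<epsilon> \<le> rho_inf D rho_one x y"
    by auto
  define g where "g = (\<lambda>\<phi>::'d \<Rightarrow> 'm \<Rightarrow> 'a. restrict (\<lambda>v. \<phi> v 1) D)"
  have inj: "inj_on g S"
  proof (rule inj_onI, rule ccontr)
    fix x y assume xy: "x \<in> S" "y \<in> S" "g x = g y" "x \<noteq> y"
    have "\<forall>v\<in>D. x v 1 = y v 1" using xy(3) unfolding g_def restrict_def by (metis)
    hence "(\<lambda>v. rho_one (x v) (y v)) ` D = {0}" using assms(3) by (auto simp: rho_one_def)
    hence "rho_inf D rho_one x y = 0" by (simp add: rho_inf_def)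
    with S(3)[OF xy(1,2,4)] assms(4) show False by simp
  qed
  have "g ` S \<subseteq> D \<rightarrow>\<^sub>E A"
  proof
    fix w assume "w \<in> g ` S"
    then obtain x where "x \<in> S" "w = g x" by auto
    hence "x \<in> D \<rightarrow>\<^sub>E full_shift A" using S(1) assms(5) by auto
    thus "w \<in> D \<rightarrow>\<^sub>E A" using \<open>w = g x\<close> by (auto simp: g_def full_shift_def)
  qed
  hence "card S \<le> card (D \<rightarrow>\<^sub>E A)"
    using card_inj_on_le[OF inj] finite_PiE[OF assms(2,1)] by blast
  also have "\<dots> = card A ^ card D" using card_PiE[OF assms(2), of "\<lambda>_. A"] by simp
  finally show "enat (card S) \<le> enat (card A ^ card D)" by simp
qed

lemma sep_lower:
  fixes A :: "'a set" and D :: "'d set" and \<sigma> :: "'m::monoid_mult \<Rightarrow> 'd \<Rightarrow> 'd"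
  assumes "finite A" "finite D" "D \<noteq> {}" "\<epsilon> > 0" "\<epsilon> \<le> 1" "\<delta> \<ge> 0"
    and sig: "\<And>m. \<sigma> m ` D \<subseteq> D" "\<And>v. v \<in> D \<Longrightarrow> \<sigma> 1 v = v"
  shows "enat (card A ^ card D) \<le> sep_num \<epsilon> (Map_set (full_shift A) shift_act rho_one F \<delta> D \<sigma>) (rho_inf D rho_one)"
proof -
  define \<Phi> where "\<Phi> = (\<lambda>\<omega>::'d \<Rightarrow> 'a. (\<lambda>v. if v \<in> D then (\<lambda>m::'m. \<omega> (\<sigma> m v)) else undefined))"
  define S where "S = \<Phi> ` (D \<rightarrow>\<^sub>E A)"
  have sD: "\<And>m v. v \<in> D \<Longrightarrow> \<sigma> m v \<in> D" using sig(1) by auto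
  have inj: "inj_on \<Phi> (D \<rightarrow>\<^sub>E A)"
  proof (rule inj_onI)
    fix a b assume ab: "a \<in> D \<rightarrow>\<^sub>E A" "b \<in> D \<rightarrow>\<^sub>E A" "\<Phi> a = \<Phi> b"
    show "a = b"
    proof (rule PiE_ext[OF ab(1,2)])
      fix v assume v: "v \<in> D"
      have "\<Phi> a v 1 = \<Phi> b v 1" using ab(3) by simp
      thus "a v = b v" using v sig(2)[OF v] by (simp add: \<Phi>_def)
    qed
  qed
  have card: "card S = card A ^ card D"
    unfolding S_def using card_image[OF inj] card_PiE[OF assms(2), of "\<lambda>_. A"] by simp
  have sub: "S \<subseteq> Map_set (full_shift A) shift_act rho_one F \<delta> D \<sigma>"
  proof
    fix \<phi> assume "\<phi> \<in> S"
    then obtain \<omega> where \<omega>: "\<omega> \<in> D \<rightarrow>\<^sub>E A" "\<phi> = \<Phi> \<omega>" unfolding S_def by auto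
    have ext: "\<phi> \<in> D \<rightarrow>\<^sub>E full_shift A"
      using \<omega> sD by (auto simp: \<Phi>_def full_shift_def PiE_def Pi_def extensional_def)
    have "rho2 D rho_one (\<phi> \<circ> \<sigma> m) (\<lambda>v. shift_act m (\<phi> v)) = 0" for m
    proof -
      have "\<forall>v\<in>D. rho_one ((\<phi> \<circ> \<sigma> m) v) (shift_act m (\<phi> v)) = 0"
        using \<omega>(2) sD sig(2) by (auto simp: rho_one_def shift_act_def \<Phi>_def)
      thus ?thesis unfolding rho2_def by simp
    qed
    thus "\<phi> \<in> Map_set (full_shift A) shift_act rho_one F \<delta> D \<sigma>"
      using ext assms(6) by (simp add: Map_set_def)
  qed
  have fin: "finite S" unfolding S_def using finite_PiE[OF assms(2,1)] by simp
  have sepd: "\<forall>x\<in>S. \<forall>y\<in>S. x \<noteq> y \<longrightarrow> \<epsilon> \<le> rho_inf D rho_one x y"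
  proof (intro ballI impI)
    fix x y assume xy: "x \<in> S" "y \<in> S" "x \<noteq> y"
    then obtain a b where ab: "a \<in> D \<rightarrow>\<^sub>E A" "b \<in> D \<rightarrow>\<^sub>E A" "x = \<Phi> a" "y = \<Phi> b"
      unfolding S_def by auto
    have "a \<noteq> b" using ab xy(3) by auto
    then obtain v where v: "v \<in> D" "a v \<noteq> b v" using ab(1,2) PiE_ext by metis
    have "rho_one (x v) (y v) = 1" using v ab sig(2)[OF v(1)] by (simp add: rho_one_def \<Phi>_def)
    hence "1 \<in> (\<lambda>v. rho_one (x v) (y v)) ` D" using v(1) by force
    hence "1 \<le> rho_inf D rho_one x y" unfolding rho_inf_def
      using assms(2) by (intro Max_ge) auto
    thus "\<epsilon> \<le> rho_inf D rho_one x y" using assms(5) by simp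
  qed
  show ?thesis unfolding sep_num_def
    by (rule SUP_upper2[where i=S]) (use sub fin sepd card in auto)
qed

theorem lemma5p2:
  fixes I :: "'i set" and le :: "'i \<Rightarrow> 'i \<Rightarrow> bool" and D :: "'i \<Rightarrow> 'd set"
    and \<sigma> :: "'i \<Rightarrow> 'm::monoid_mult \<Rightarrow> 'd \<Rightarrow> 'd" and A :: "'a set"
  assumes "sofic_approx I le D \<sigma>"
    and "finite A"
  shows "sofic_entropy I le D \<sigma> (full_shift A) (shift_act :: 'm \<Rightarrow> ('m \<Rightarrow> 'a) \<Rightarrow> ('m \<Rightarrow> 'a)) rho_one
           = elog (enat (card A))"
proof -
  have dir: "directed_set I le" and
    pA: "\<And>i. i \<in> I \<Longrightarrow> finite (D i) \<and> D i \<noteq> {} \<and> (\<forall>m. \<sigma> i m ` D i \<subseteq> D i) \<and> (\<forall>v\<in>D i. \<sigma> i 1 v = v)"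
    using assms(1) unfolding sofic_approx_def by auto
  have dtrans: "\<And>i j k. i\<in>I \<Longrightarrow> j\<in>I \<Longrightarrow> k\<in>I \<Longrightarrow> le i j \<Longrightarrow> le j k \<Longrightarrow> le i k"
    and drefl: "\<And>i. i \<in> I \<Longrightarrow> le i i"
    using dir unfolding directed_set_def by blast+
  have evI: "eventually (\<lambda>i. i \<in> I) (net_filter I le)"
  proof -
    obtain i where "i \<in> I" using dir unfolding directed_set_def by auto
    hence "net_filter I le \<le> principal {j\<in>I. le i j}" unfolding net_filter_def by (rule INF_lower)
    thus ?thesis by (rule filter_leD) (auto simp: eventually_principal)
  qed
  have nb: "\<not> trivial_limit (net_filter I le)"
  proof
    assume "trivial_limit (net_filter I le)"
    hence "eventually (\<lambda>_. False) (net_filter I le)" by (simp add: trivial_limit_def)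
    moreover have "eventually P (net_filter I le) \<longleftrightarrow> (\<exists>i\<in>I. eventually P (principal {j\<in>I. le i j}))" for P
      unfolding net_filter_def
    proof (rule eventually_INF_base)
      show "I \<noteq> {}" using dir unfolding directed_set_def by auto
      fix a b assume "a \<in> I" "b \<in> I"
      then obtain k where k: "k \<in> I" "le a k" "le b k" using dir unfolding directed_set_def by blast
      have "{j\<in>I. le k j} \<subseteq> {j\<in>I. le a j} \<inter> {j\<in>I. le b j}"
        using k \<open>a \<in> I\<close> \<open>b \<in> I\<close> dtrans by blast
      hence "principal {j\<in>I. le k j} \<le> inf (principal {j\<in>I. le a j}) (principal {j\<in>I. le b j})"
        by (simp add: inf_principal)
      thus "\<exists>x\<in>I. principal {j\<in>I. le x j} \<le> inf (principal {j\<in>I. le a j}) (principal {j\<in>I. le b j})"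
        using k by blast
    qed
    ultimately obtain i where "i \<in> I" "\<forall>j\<in>I. le i j \<longrightarrow> False" by (auto simp: eventually_principal)
    thus False using drefl by blast
  qed
  define val where "val = (\<lambda>\<epsilon> F \<delta> i. elog (sep_num \<epsilon> (Map_set (full_shift A) (shift_act :: 'm \<Rightarrow> ('m \<Rightarrow> 'a) \<Rightarrow> ('m \<Rightarrow> 'a)) rho_one F \<delta> (D i) (\<sigma> i)) (rho_inf (D i) rho_one))
               / ereal (real (card (D i))))"
  have S: "sofic_entropy I le D \<sigma> (full_shift A) (shift_act :: 'm \<Rightarrow> ('m \<Rightarrow> 'a) \<Rightarrow> ('m \<Rightarrow> 'a)) rho_one
     = (SUP \<epsilon>\<in>{0<..}. INF F\<in>{F. finite F}. INF \<delta>\<in>{0<..}. Limsup (net_filter I le) (val \<epsilon> F \<delta>))"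
    unfolding sofic_entropy_def val_def by simp
  let ?k = "card A"
  have up: "val \<epsilon> F \<delta> i \<le> elog (enat ?k)" if "\<epsilon> > 0" "i \<in> I" for \<epsilon> F \<delta> i
  proof -
    let ?n = "card (D i)"
    have pi: "finite (D i)" "D i \<noteq> {}" using pA[OF that(2)] by auto
    have n0: "?n > 0" using pi by (simp add: card_gt_0_iff)
    have "Map_set (full_shift A) (shift_act :: 'm \<Rightarrow> ('m \<Rightarrow> 'a) \<Rightarrow> ('m \<Rightarrow> 'a)) rho_one F \<delta> (D i) (\<sigma> i) \<subseteq> D i \<rightarrow>\<^sub>E full_shift A"
      unfolding Map_set_def by auto
    from sep_upper[OF assms(2) pi that(1) this]
    obtain s where s: "sep_num \<epsilon> (Map_set (full_shift A) (shift_act :: 'm \<Rightarrow> ('m \<Rightarrow> 'a) \<Rightarrow> ('m \<Rightarrow> 'a)) rho_one F \<delta> (D i) (\<sigma> i)) (rho_inf (D i) rho_one) = enat s"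
      "s \<le> ?k ^ ?n"
      by (metis enat_ile enat_ord_simps(1))
    show ?thesis
    proof (cases "s = 0")
      case True thus ?thesis using s n0 by (simp add: val_def elog_def)
    next
      case False
      hence k0: "?k > 0" using s(2) n0 by (metis gr0I le_zero_eq power_0_left)
      have "ln (real s) \<le> ln (real (?k ^ ?n))" using False s(2) k0 by (subst ln_le_cancel_iff) (auto simp del: of_nat_power simp: of_nat_le_iff)
      also have "\<dots> = real ?n * ln (real ?k)" by (simp add: ln_realpow k0)
      finally have "ln (real s) / real ?n \<le> ln (real ?k)" using n0 by (simp add: divide_le_eq mult.commute)
      thus ?thesis using s False k0 n0 by (simp add: val_def elog_def)
    qed
  qed
  have le1: "sofic_entropy I le D \<sigma> (full_shift A) (shift_act :: 'm \<Rightarrow> ('m \<Rightarrow> 'a) \<Rightarrow> ('m \<Rightarrow> 'a)) rho_one \<le> elog (enat ?k)"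
    unfolding S
  proof (rule SUP_least)
    fix \<epsilon> :: real assume e: "\<epsilon> \<in> {0<..}"
    have L1: "Limsup (net_filter I le) (val \<epsilon> {} 1) \<le> elog (enat ?k)"
      by (rule Limsup_bounded) (rule eventually_mono[OF evI], use up e in auto)
    have L2: "(INF \<delta>\<in>{0<..}. Limsup (net_filter I le) (val \<epsilon> {} \<delta>)) \<le> elog (enat ?k)"
      by (rule INF_lower2[where i=1 and f="\<lambda>\<delta>. Limsup (net_filter I le) (val \<epsilon> {} \<delta>)", OF _ L1]) auto
    show "(INF F\<in>{F. finite F}. INF \<delta>\<in>{0<..}. Limsup (net_filter I le) (val \<epsilon> F \<delta>)) \<le> elog (enat ?k)"
      by (rule INF_lower2[where i="{}" and f="\<lambda>F. INF \<delta>\<in>{0<..}. Limsup (net_filter I le) (val \<epsilon> F \<delta>)", OF _ L2]) auto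
  qed
  have ge1: "elog (enat ?k) \<le> sofic_entropy I le D \<sigma> (full_shift A) (shift_act :: 'm \<Rightarrow> ('m \<Rightarrow> 'a) \<Rightarrow> ('m \<Rightarrow> 'a)) rho_one"
  proof (cases "?k = 0")
    case True thus ?thesis by (simp add: elog_def)
  next
    case False
    hence k0: "?k > 0" by simp
    have eq: "val 1 F \<delta> i = elog (enat ?k)" if "\<delta> > 0" "i \<in> I" for F \<delta> i
    proof -
      let ?n = "card (D i)"
      have pi: "finite (D i)" "D i \<noteq> {}" "\<And>m. \<sigma> i m ` D i \<subseteq> D i" "\<And>v. v \<in> D i \<Longrightarrow> \<sigma> i 1 v = v"
        using pA[OF that(2)] by auto
      have n0: "?n > 0" using pi by (simp add: card_gt_0_iff)
      have "Map_set (full_shift A) (shift_act :: 'm \<Rightarrow> ('m \<Rightarrow> 'a) \<Rightarrow> ('m \<Rightarrow> 'a)) rho_one F \<delta> (D i) (\<sigma> i) \<subseteq> D i \<rightarrow>\<^sub>E full_shift A"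
        unfolding Map_set_def by auto
      note U = sep_upper[OF assms(2) pi(1,2) zero_less_one this]
      have L: "enat (?k ^ ?n) \<le> sep_num 1 (Map_set (full_shift A) (shift_act :: 'm \<Rightarrow> ('m \<Rightarrow> 'a) \<Rightarrow> ('m \<Rightarrow> 'a)) rho_one F \<delta> (D i) (\<sigma> i)) (rho_inf (D i) rho_one)"
        by (rule sep_lower) (use assms(2) pi that(1) in auto)
      from antisym[OF U L]
      have s: "sep_num 1 (Map_set (full_shift A) (shift_act :: 'm \<Rightarrow> ('m \<Rightarrow> 'a) \<Rightarrow> ('m \<Rightarrow> 'a)) rho_one F \<delta> (D i) (\<sigma> i)) (rho_inf (D i) rho_one) = enat (?k ^ ?n)"
        using that(1) by simp
      have "ln (real (?k ^ ?n)) = real ?n * ln (real ?k)" by (simp add: ln_realpow k0)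
      thus ?thesis using s k0 n0 by (simp add: val_def elog_def)
    qed
    have "elog (enat ?k) \<le> (INF F\<in>{F. finite F}. INF \<delta>\<in>{0<..}. Limsup (net_filter I le) (val 1 F \<delta>))"
    proof (intro INF_greatest)
      fix F :: "'m set" and \<delta> :: real assume d: "\<delta> \<in> {0<..}"
      have "Limsup (net_filter I le) (val 1 F \<delta>) = Limsup (net_filter I le) (\<lambda>_. elog (enat ?k))"
        by (rule Limsup_eq) (rule eventually_mono[OF evI], use eq d in auto)
      also have "\<dots> = elog (enat ?k)" by (rule Limsup_const[OF nb])
      finally show "elog (enat ?k) \<le> Limsup (net_filter I le) (val 1 F \<delta>)" by simp
    qed
    also have "\<dots> \<le> (SUP \<epsilon>\<in>{0<..}. INF F\<in>{F. finite F}. INF \<delta>\<in>{0<..}. Limsup (net_filter I le) (val \<epsilon> F \<delta>))"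
      by (rule SUP_upper) auto
    finally show ?thesis unfolding S .
  qed
  show ?thesis using le1 ge1 by (rule antisym)
qed

end
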